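(* Consider a stationary memoryless uncertain channel with single-symbol map $N$ as described in the context, and let $0\le\delta_1<m_{\mathscr{Y}}(V_N)$. Let $\bar X$ be a one-step transmitted UV with $[\![\bar X]\!]\subseteq\mathscr{X}$, $\bar Y$ its received UV, and $\bar\delta\ge0$ such that $\bar X\in\mathscr{F}_{\bar\delta}(1)$, $\bar\delta\le\delta_1/m_{\mathscr{Y}}([\![\bar Y]\!])$ and $$I_{\bar\delta/|[\![\bar X]\!]|}(\bar Y;\bar X)=\sup\Big\{I_{\tilde\delta/|[\![X(1)]\!]|}(Y(1);X(1)) : \tilde\delta\ge0,\ X(1)\in\mathscr{F}_{\tilde\delta}(1),\ \tilde\delta\le\delta_1/m_{\mathscr{Y}}([\![Y(1)]\!])\Big\}.$$ Let $\hat\delta=\max_{S\in[\![\bar Y|\bar X]\!]^*_{\bar\delta/|[\![\bar X]\!]|}} m_{\mathscr{Y}}(S)/m_{\mathscr{Y}}([\![\bar Y]\!])$. If for all $n>1$ we have $\bar\delta(\hat\delta\,|[\![\bar X]\!]|)^{n-1}\le\delta_n<1$, then under the product uncertainty assumption $C_N(\{\delta_n\})_*=I_{\bar\delta/|[\![\bar X]\!]|}(\bar Y;\bar X)$.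
   Context: Uncertain variables (UVs): a UV is a map $U$ from a sample space $\Omega$ to a set; jointly considered UVs share $\Omega$. $[\![U]\!]=\{U(\omega)\}$; $[\![U|w]\!]=\{U(\omega):W(\omega)=w\}$, $[\![U|W]\!]=\{[\![U|w]\!]:w\in[\![W]\!]\}$. An uncertainty function on a set $\mathscr{U}$ is a map $m$ on subsets of $\mathscr{U}$ with $m(\emptyset)=0$, $0<m(S)<\infty$ for nonempty $S$, $\max\{m(S_1),m(S_2)\}\le m(S_1\cup S_2)$. Association: $\mathscr{A}(X;Y)=\{m_{\mathscr{X}}([\![X|y_1]\!]\cap[\![X|y_2]\!])/m_{\mathscr{X}}([\![X]\!]):y_1\ne y_2\in[\![Y]\!]\}\setminus\{0\}$, $\mathscr{A}(Y;X)=\{m_{\mathscr{Y}}([\![Y|x_1]\!]\cap[\![Y|x_2]\!])/m_{\mathscr{Y}}([\![Y]\!]):x_1\ne x_2\in[\![X]\!]\}\setminus\{0\}$; $\mathscr{A}\succ\delta$: all elements $>\delta$ (false for $\emptyset$); $\mathscr{A}\preceq\delta$: all elements $\le\delta$ (true for $\emptyset$); $(X,Y)\stackrel{d}{\leftrightarrow}(\delta_1,\delta_2)$ iff $\mathscr{A}(X;Y)\succ\delta_1,\mathscr{A}(Y;X)\succ\delta_2$; $(X,Y)\stackrel{a}{\leftrightarrow}(\delta_1,\delta_2)$ iff $\mathscr{A}(X;Y)\preceq\delta_1,\mathscr{A}(Y;X)\preceq\delta_2$. $\delta$-mutual information: for UVs $U$ (with uncertainty function $m_{\mathscr{U}}$)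 and $W$, $u,u'\in[\![U]\!]$ are $\delta$-connected via $[\![U|W]\!]$ if there are $w_1,\dots,w_N\in[\![W]\!]$ with $u\in[\![U|w_1]\!]$, $u'\in[\![U|w_N]\!]$, $m_{\mathscr{U}}([\![U|w_i]\!]\cap[\![U|w_{i-1}]\!])/m_{\mathscr{U}}([\![U]\!])>\delta$ for $1<i\le N$; a set is $\delta$-connected if all pairs of its points are. A $\delta$-overlap family $[\![U|W]\!]^*_\delta$ is a family of distinct subsets covering $[\![U]\!]$, of largest cardinality among covering families with (i) each member $\delta$-connected and containing some $[\![U|w]\!]$; (ii) distinct members $S_1,S_2$ satisfy $m_{\mathscr{U}}(S_1\cap S_2)\le\delta\,m_{\mathscr{U}}([\![U]\!])$; (iii) each $[\![U|w]\!]$ contained in some member. $I_\delta(U;W)=\log_2|[\![U|W]\!]^*_\delta|$ if such a family exists, else $0$. Stationary memoryless channel: $\mathscr{X}$ is a totally bounded normed metric space, $\mathscr{Y}$ an output set, $N:\mathscr{X}\to2^{\mathscr{Y}}$; for $x(1:n)\in\mathscr{X}^n$, $S_N(x(1:n))=N(x(1))\times\cdots\times N(x(n))$. $m_{\mathscr{Y}}$ (resp. $m_{\mathscr{X}}$) is an uncertainty function on each $\mathscr{Y}^n$ (resp. $\mathscr{X}^n$), with $m_{\mathscr{Y}}(\mathscr{Y}^n)=1$. $V_N=N(x^* )$ with $x^*$ minimizing $m_{\mathscr{Y}}(N(x))$. A discrete $\mathcal{C}_n\subseteq\mathscr{X}^n$ is $(N,\delta_n)$-distinguishable if $m_{\mathscr{Y}}(S_N(x_1(1:n))\cap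 S_N(x_2(1:n)))/m_{\mathscr{Y}}(\mathscr{Y}^n)\le\delta_n/|\mathcal{C}_n|$ for all distinct codewords; $R_{\delta_n}=\sup\frac1n\log_2|\mathcal{C}_n|$ over such codebooks; $C_N(\{\delta_n\})_*=\inf_{n\ge1}R_{\delta_n}$. For a codebook $\mathcal{C}_n$, transmitted UV $X(1:n)$ and received UV $Y(1:n)$ satisfy $[\![X(1:n)]\!]=\mathcal{C}_n$, $[\![Y(1:n)]\!]=\bigcup_{x(1:n)\in\mathcal{C}_n}S_N(x(1:n))$, $[\![Y(1:n)|x(1:n)]\!]=\{y\in[\![Y(1:n)]\!]:y\in S_N(x(1:n))\}$, $[\![X(1:n)|y(1:n)]\!]=\{x\in[\![X(1:n)]\!]:y(1:n)\in S_N(x)\}$. $\mathscr{F}_\delta(n)$ is the set of transmitted UVs $X(1:n)$ with $[\![X(1:n)]\!]\subseteq\mathscr{X}^n$ such that $(X(1:n),Y(1:n))\stackrel{d}{\leftrightarrow}(0,\delta/|[\![X(1:n)]\!]|)$ or $(X(1:n),Y(1:n))\stackrel{a}{\leftrightarrow}(1,\delta/|[\![X(1:n)]\!]|)$. Product uncertainty assumption: $m_{\mathscr{Y}}(S_1\times\cdots\times S_n)=\prod_i m_{\mathscr{Y}}(S_i)$ for all $n$ and $S_i\subseteq\mathscr{Y}$. *)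

theory Defs
  imports "HOL-Analysis.Analysis" "HOL-Library.Extended_Real"
begin

definition uncertainty_fun :: "'a set \<Rightarrow> ('a set \<Rightarrow> real) \<Rightarrow> bool" where
  "uncertainty_fun U m \<longleftrightarrow>
     m {} = 0 \<and>
     (\<forall>S. S \<subseteq> U \<and> S \<noteq> {} \<longrightarrow> 0 < m S) \<and>
     (\<forall>S1 S2. S1 \<subseteq> U \<and> S2 \<subseteq> U \<longrightarrow> max (m S1) (m S2) \<le> m (S1 \<union> S2))"

text \<open>m: uncertainty function, Ur: the range of U, F: the family of conditional ranges of U given W.\<close>

definition delta_connected_pts ::
  "('a set \<Rightarrow> real) \<Rightarrow> 'a set \<Rightarrow> 'a set set \<Rightarrow> real \<Rightarrow> 'a \<Rightarrow> 'a \<Rightarrow> bool" where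
  "delta_connected_pts m Ur F \<delta> u u' \<longleftrightarrow>
     (\<exists>Ss. Ss \<noteq> [] \<and> set Ss \<subseteq> F \<and> u \<in> hd Ss \<and> u' \<in> last Ss \<and>
        (\<forall>i. 0 < i \<and> i < length Ss \<longrightarrow> m (Ss ! i \<inter> Ss ! (i - 1)) / m Ur > \<delta>))"

definition delta_connected_set ::
  "('a set \<Rightarrow> real) \<Rightarrow> 'a set \<Rightarrow> 'a set set \<Rightarrow> real \<Rightarrow> 'a set \<Rightarrow> bool" where
  "delta_connected_set m Ur F \<delta> S \<longleftrightarrow> (\<forall>u\<in>S. \<forall>u'\<in>S. delta_connected_pts m Ur F \<delta> u u')"

definition overlap_admissible ::
  "('a set \<Rightarrow> real) \<Rightarrow> 'a set \<Rightarrow> 'a set set \<Rightarrow> real \<Rightarrow> 'a set set \<Rightarrow> bool" where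
  "overlap_admissible m Ur F \<delta> D \<longleftrightarrow>
     (\<forall>S\<in>D. S \<subseteq> Ur) \<and> \<Union>D = Ur \<and>
     (\<forall>S\<in>D. delta_connected_set m Ur F \<delta> S \<and> (\<exists>A\<in>F. A \<subseteq> S)) \<and>
     (\<forall>S1\<in>D. \<forall>S2\<in>D. S1 \<noteq> S2 \<longrightarrow> m (S1 \<inter> S2) \<le> \<delta> * m Ur) \<and>
     (\<forall>A\<in>F. \<exists>S\<in>D. A \<subseteq> S)"

definition overlap_family ::
  "('a set \<Rightarrow> real) \<Rightarrow> 'a set \<Rightarrow> 'a set set \<Rightarrow> real \<Rightarrow> 'a set set \<Rightarrow> bool" where
  "overlap_family m Ur F \<delta> D \<longleftrightarrow>
     overlap_admissible m Ur F \<delta> D \<and>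
     (\<forall>D'. overlap_admissible m Ur F \<delta> D' \<longrightarrow> (\<exists>f. inj_on f D' \<and> f ` D' \<subseteq> D))"

definition delta_MI :: "('a set \<Rightarrow> real) \<Rightarrow> 'a set \<Rightarrow> 'a set set \<Rightarrow> real \<Rightarrow> real" where
  "delta_MI m Ur F \<delta> =
     (if \<exists>D. overlap_family m Ur F \<delta> D
      then log 2 (real (card (SOME D. overlap_family m Ur F \<delta> D))) else 0)"

definition Xn :: "'x set \<Rightarrow> nat \<Rightarrow> 'x list set" where
  "Xn Xset n = {xs. length xs = n \<and> set xs \<subseteq> Xset}"

definition Yn :: "nat \<Rightarrow> 'y list set" where
  "Yn n = {ys. length ys = n}"

definition SN :: "('x \<Rightarrow> 'y set) \<Rightarrow> 'x list \<Rightarrow> 'y list set" where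
  "SN N xs = listset (map N xs)"

definition mY1 :: "('y list set \<Rightarrow> real) \<Rightarrow> 'y set \<Rightarrow> real" where
  "mY1 mY S = mY ((\<lambda>y. [y]) ` S)"

text \<open>For a codebook C (= range of the transmitted UV X(1:n)):\<close>
definition rangeY :: "('x \<Rightarrow> 'y set) \<Rightarrow> 'x list set \<Rightarrow> 'y list set" where
  "rangeY N C = (\<Union>x\<in>C. SN N x)"

definition condY :: "('x \<Rightarrow> 'y set) \<Rightarrow> 'x list set \<Rightarrow> 'x list \<Rightarrow> 'y list set" where
  "condY N C x = {y \<in> rangeY N C. y \<in> SN N x}"

definition condX :: "('x \<Rightarrow> 'y set) \<Rightarrow> 'x list set \<Rightarrow> 'y list \<Rightarrow> 'x list set" where
  "condX N C y = {x \<in> C. y \<in> SN N x}"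

definition assocXY :: "('x list set \<Rightarrow> real) \<Rightarrow> ('x \<Rightarrow> 'y set) \<Rightarrow> 'x list set \<Rightarrow> real set" where
  "assocXY mX N C =
     {mX (condX N C y1 \<inter> condX N C y2) / mX C | y1 y2.
        y1 \<in> rangeY N C \<and> y2 \<in> rangeY N C \<and> y1 \<noteq> y2} - {0}"

definition assocYX :: "('y list set \<Rightarrow> real) \<Rightarrow> ('x \<Rightarrow> 'y set) \<Rightarrow> 'x list set \<Rightarrow> real set" where
  "assocYX mY N C =
     {mY (condY N C x1 \<inter> condY N C x2) / mY (rangeY N C) | x1 x2.
        x1 \<in> C \<and> x2 \<in> C \<and> x1 \<noteq> x2} - {0}"

definition set_succ :: "real set \<Rightarrow> real \<Rightarrow> bool" where
  "set_succ A \<delta> \<longleftrightarrow> A \<noteq> {} \<and> (\<forall>a\<in>A. a > \<delta>)"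

definition set_preceq :: "real set \<Rightarrow> real \<Rightarrow> bool" where
  "set_preceq A \<delta> \<longleftrightarrow> (\<forall>a\<in>A. a \<le> \<delta>)"

definition F_class ::
  "('x list set \<Rightarrow> real) \<Rightarrow> ('y list set \<Rightarrow> real) \<Rightarrow> 'x set \<Rightarrow> ('x \<Rightarrow> 'y set) \<Rightarrow> real \<Rightarrow> nat
     \<Rightarrow> 'x list set set" where
  "F_class mX mY Xset N \<delta> n =
     {C. C \<subseteq> Xn Xset n \<and> finite C \<and> C \<noteq> {} \<and>
         ((set_succ (assocXY mX N C) 0 \<and> set_succ (assocYX mY N C) (\<delta> / real (card C))) \<or>
          (set_preceq (assocXY mX N C) 1 \<and> set_preceq (assocYX mY N C) (\<delta> / real (card C))))}"

definition MI_YX :: "('y list set \<Rightarrow> real) \<Rightarrow> ('x \<Rightarrow> 'y set) \<Rightarrow> real \<Rightarrow> 'x list set \<Rightarrow> real" where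
  "MI_YX mY N \<delta> C = delta_MI mY (rangeY N C) (condY N C ` C) \<delta>"

definition distinguishable ::
  "('y list set \<Rightarrow> real) \<Rightarrow> 'x set \<Rightarrow> ('x \<Rightarrow> 'y set) \<Rightarrow> nat \<Rightarrow> real \<Rightarrow> 'x list set \<Rightarrow> bool" where
  "distinguishable mY Xset N n \<delta> C \<longleftrightarrow>
     C \<subseteq> Xn Xset n \<and> finite C \<and> C \<noteq> {} \<and>
     (\<forall>x1\<in>C. \<forall>x2\<in>C. x1 \<noteq> x2 \<longrightarrow>
        mY (SN N x1 \<inter> SN N x2) / mY (Yn n) \<le> \<delta> / real (card C))"

definition rate ::
  "('y list set \<Rightarrow> real) \<Rightarrow> 'x set \<Rightarrow> ('x \<Rightarrow> 'y set) \<Rightarrow> nat \<Rightarrow> real \<Rightarrow> ereal" where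
  "rate mY Xset N n \<delta> =
     (SUP C \<in> {C. distinguishable mY Xset N n \<delta> C}. ereal (log 2 (real (card C)) / real n))"

definition capacity_star ::
  "('y list set \<Rightarrow> real) \<Rightarrow> 'x set \<Rightarrow> ('x \<Rightarrow> 'y set) \<Rightarrow> (nat \<Rightarrow> real) \<Rightarrow> ereal" where
  "capacity_star mY Xset N \<delta>s = (INF n \<in> {1..}. rate mY Xset N n (\<delta>s n))"

end

theory Submission imports Defs begin

lemma unc_mono:
  assumes "uncertainty_fun U m" "A \<subseteq> B" "B \<subseteq> U"
  shows "m A \<le> m B"
proof -
  have "max (m A) (m B) \<le> m (A \<union> B)" using assms unfolding uncertainty_fun_def
    by (meson order_trans)
  moreover have "A \<union> B = B" using assms by blast
  ultimately show ?thesis by simp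
qed

lemma unc_nonneg:
  assumes "uncertainty_fun U m" "A \<subseteq> U"
  shows "0 \<le> m A"
  using assms unfolding uncertainty_fun_def by (cases "A = {}") (auto intro: less_imp_le)

lemma unc_pos:
  assumes "uncertainty_fun U m" "A \<subseteq> U" "A \<noteq> {}"
  shows "0 < m A"
  using assms unfolding uncertainty_fun_def by auto

lemma in_listset_iff':
  "xs \<in> listset As \<longleftrightarrow> length xs = length As \<and> (\<forall>i<length As. xs ! i \<in> As ! i)"
proof (induction As arbitrary: xs)
  case Nil
  then show ?case by auto
next
  case (Cons A As)
  show ?case
  proof (cases xs)
    case Nil
    then show ?thesis by (auto simp: set_Cons_def)
  next
    case (Cons y ys)
    have "xs \<in> listset (A # As) \<longleftrightarrow> y \<in> A \<and> ys \<in> listset As"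
      using Cons by (auto simp: set_Cons_def)
    also have "\<dots> \<longleftrightarrow> length xs = length (A # As) \<and> (\<forall>i<length (A # As). xs ! i \<in> (A # As) ! i)"
      using Cons.IH[of ys] \<open>xs = y # ys\<close> by (auto simp: nth_Cons split: nat.splits)
    finally show ?thesis .
  qed
qed

lemma SN_single: "SN N [a] = (\<lambda>y. [y]) ` N a"
  by (auto simp: SN_def set_Cons_def)

lemma SN_subset: "SN N xs \<subseteq> Yn (length xs)"
  by (auto simp: SN_def Yn_def in_listset_iff')

lemma SN_inter:
  assumes "length xs = length ys"
  shows "SN N xs \<inter> SN N ys = listset (map2 (\<lambda>a b. N a \<inter> N b) xs ys)"
  using assms by (auto simp: SN_def in_listset_iff')

lemma prod_list_bound:
  fixes fs :: "real list"
  assumes "\<forall>f\<in>set fs. 0 \<le> f \<and> f \<le> B" "i < length fs" "fs ! i \<le> b"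
  shows "prod_list fs \<le> b * B ^ (length fs - 1)"
  using assms
proof (induction fs arbitrary: i)
  case Nil
  then show ?case by simp
next
  case (Cons a fs)
  have B0: "0 \<le> B" using Cons.prems(1) by auto
  have pf: "prod_list fs \<le> B ^ length fs"
    using Cons.prems(1) B0
  proof (induction fs)
    case Nil then show ?case by simp
  next
    case (Cons c cs)
    then show ?case by (simp add: mult_mono prod_list_nonneg)
  qed
  have pn: "0 \<le> prod_list fs" using Cons.prems(1) by (auto intro: prod_list_nonneg)
  show ?case
  proof (cases i)
    case 0
    then have "a \<le> b" using Cons.prems by simp
    then have "a * prod_list fs \<le> b * B ^ length fs"
      using pf pn Cons.prems(1) by (auto intro: mult_mono)
    then show ?thesis by simp
  next
    case (Suc j)
    then have "prod_list fs \<le> b * B ^ (length fs - 1)" "j < length fs"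
      using Cons.prems Cons.IH[of j] by auto
    then have "a * prod_list fs \<le> B * (b * B ^ (length fs - 1))"
      using pn Cons.prems(1) by (auto intro: mult_mono)
    also have "\<dots> = b * B ^ length fs"
      using \<open>j < length fs\<close> by (cases "length fs") auto
    finally show ?thesis by simp
  qed
qed


lemma Xn1_elem: "x \<in> Xn Xset (Suc 0) \<Longrightarrow> x = [hd x] \<and> hd x \<in> Xset"
  by (cases x) (auto simp: Xn_def)

lemma rangeY_sub: "C \<subseteq> Xn Xset n \<Longrightarrow> rangeY N C \<subseteq> Yn n"
  unfolding rangeY_def Xn_def using SN_subset by fastforce

lemma condY_eq: "x \<in> C \<Longrightarrow> condY N C x = SN N x"
  by (auto simp: condY_def rangeY_def)

lemma condY_sub: "condY N C x \<subseteq> rangeY N C"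
  by (auto simp: condY_def)

lemma admD:
  assumes "overlap_admissible m Ur F d D"
  shows "\<And>S. S \<in> D \<Longrightarrow> S \<subseteq> Ur" "\<Union>D = Ur"
    "\<And>S. S \<in> D \<Longrightarrow> delta_connected_set m Ur F d S"
    "\<And>S. S \<in> D \<Longrightarrow> \<exists>A\<in>F. A \<subseteq> S"
    "\<And>S1 S2. S1 \<in> D \<Longrightarrow> S2 \<in> D \<Longrightarrow> S1 \<noteq> S2 \<Longrightarrow> m (S1 \<inter> S2) \<le> d * m Ur"
    "\<And>A. A \<in> F \<Longrightarrow> \<exists>S\<in>D. A \<subseteq> S"
  using assms unfolding overlap_admissible_def by auto

lemma adm_inj:
  assumes unc: "uncertainty_fun (Yn 1) mY" and C: "C \<subseteq> Xn Xset 1"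
    and adm: "overlap_admissible mY (rangeY N C) (condY N C ` C) d D'"
    and small: "\<forall>x\<in>C. d * mY (rangeY N C) < mY (condY N C x)"
  shows "\<exists>g. inj_on g D' \<and> g ` D' \<subseteq> C \<and> (\<forall>S\<in>D'. condY N C (g S) \<subseteq> S)"
proof -
  define g where "g S = (SOME x. x \<in> C \<and> condY N C x \<subseteq> S)" for S
  have gp: "g S \<in> C \<and> condY N C (g S) \<subseteq> S" if SD: "S \<in> D'" for S
  proof -
    obtain A where "A \<in> condY N C ` C" "A \<subseteq> S" using admD(4)[OF adm SD] by metis
    then have "\<exists>x. x \<in> C \<and> condY N C x \<subseteq> S" by auto
    then show ?thesis unfolding g_def by (rule someI_ex)
  qed
  have RY: "rangeY N C \<subseteq> Yn 1" using C by (rule rangeY_sub)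
  have "inj_on g D'"
  proof (rule inj_onI, rule ccontr)
    fix S1 S2 assume S: "S1 \<in> D'" "S2 \<in> D'" "g S1 = g S2" "S1 \<noteq> S2"
    have g1: "g S1 \<in> C" "condY N C (g S1) \<subseteq> S1" using gp[OF S(1)] by auto
    have sub: "condY N C (g S1) \<subseteq> S1 \<inter> S2" using gp[OF S(1)] gp[OF S(2)] S(3) by auto
    have "S1 \<subseteq> rangeY N C" using admD(1)[OF adm S(1)] .
    then have "S1 \<inter> S2 \<subseteq> Yn 1" using RY by auto
    then have "mY (condY N C (g S1)) \<le> mY (S1 \<inter> S2)"
      using unc_mono[OF unc sub] by simp
    also have "\<dots> \<le> d * mY (rangeY N C)" using admD(5)[OF adm S(1,2,4)] .
    also have "\<dots> < mY (condY N C (g S1))" using small g1(1) by simp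
    finally show False by simp
  qed
  then show ?thesis using gp by auto
qed

lemma MI_card:
  assumes "overlap_family m Ur F d D" "finite D"
    "\<forall>D'. overlap_admissible m Ur F d D' \<longrightarrow> finite D'"
  shows "delta_MI m Ur F d = log 2 (card D)"
proof -
  have ex: "\<exists>D. overlap_family m Ur F d D" using assms(1) by blast
  define D2 where "D2 = (SOME D. overlap_family m Ur F d D)"
  have D2: "overlap_family m Ur F d D2" unfolding D2_def using ex by (rule someI_ex)
  have f2: "finite D2" using D2 assms(3) unfolding overlap_family_def by simp
  have A1: "overlap_admissible m Ur F d D" "overlap_admissible m Ur F d D2"
    using assms(1) D2 unfolding overlap_family_def by simp_all
  have I1: "\<forall>D'. overlap_admissible m Ur F d D' \<longrightarrow> (\<exists>f. inj_on f D' \<and> f ` D' \<subseteq> D2)"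
    using D2 unfolding overlap_family_def by simp
  have I2: "\<forall>D'. overlap_admissible m Ur F d D' \<longrightarrow> (\<exists>f. inj_on f D' \<and> f ` D' \<subseteq> D)"
    using assms(1) unfolding overlap_family_def by simp
  obtain f where f: "inj_on f D" "f ` D \<subseteq> D2" using I1 A1(1) by blast
  obtain h where h: "inj_on h D2" "h ` D2 \<subseteq> D" using I2 A1(2) by blast
  have "card D \<le> card D2" using card_inj_on_le[OF f f2] .
  moreover have "card D2 \<le> card D" using card_inj_on_le[OF h assms(2)] .
  ultimately have "card D2 = card D" by simp
  have "delta_MI m Ur F d = log 2 (real (card D2))"
    unfolding delta_MI_def D2_def[symmetric] using ex by (simp only: if_True)
  then show ?thesis using \<open>card D2 = card D\<close> by (simp only:)
qed


lemma upper_part: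
  assumes uncX1: "uncertainty_fun (Xn Xset 1) mX" and uncY1: "uncertainty_fun (Yn 1) mY"
    and norm1: "mY (Yn 1) = 1"
    and dist: "distinguishable mY Xset N 1 d1 C"
    and d1: "0 \<le> d1" and big: "\<forall>a\<in>Xset. d1 < mY1 mY (N a)"
  shows "0 < mY (rangeY N C)"
    "C \<in> F_class mX mY Xset N (d1 / mY (rangeY N C)) 1"
    "MI_YX mY N (d1 / mY (rangeY N C) / real (card C)) C = log 2 (real (card C))"
proof -
  have C: "C \<subseteq> Xn Xset 1" "finite C" "C \<noteq> {}" using dist unfolding distinguishable_def by auto
  define k where "k = real (card C)"
  have k1: "1 \<le> k" using C unfolding k_def by (simp add: Suc_leI card_gt_0_iff)
  define R where "R = rangeY N C"
  have RY: "R \<subseteq> Yn 1" unfolding R_def using C(1) by (rule rangeY_sub)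
  have cm: "mY (condY N C x) = mY1 mY (N (hd x))" if "x \<in> C" for x
  proof -
    have "x = [hd x]" using Xn1_elem[of x Xset] C(1) that by auto
    then show ?thesis using condY_eq[OF that, of N] SN_single[of N "hd x"] unfolding mY1_def by metis
  qed
  have cbig: "d1 < mY (condY N C x)" if "x \<in> C" for x
    using cm[OF that] big Xn1_elem[of x Xset] C(1) that by auto
  have csub: "condY N C x \<subseteq> R" for x unfolding R_def by (rule condY_sub)
  have mR: "0 < mY R"
  proof -
    obtain x where x: "x \<in> C" using C by auto
    have "condY N C x \<noteq> {}"
    proof
      assume "condY N C x = {}"
      then have "mY (condY N C x) = 0" using uncY1 unfolding uncertainty_fun_def by simp
      then show False using cbig[OF x] d1 by simp
    qed
    then have "R \<noteq> {}" using csub[of x] by blast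
    then show ?thesis using unc_pos[OF uncY1 RY] by simp
  qed
  then show "0 < mY (rangeY N C)" unfolding R_def .
  define d where "d = d1 / mY R / k"
  have dR: "d * mY R = d1 / k" unfolding d_def using mR k1 by (simp add: field_simps)
  have ov: "mY (condY N C x1 \<inter> condY N C x2) \<le> d1 / k" if "x1 \<in> C" "x2 \<in> C" "x1 \<noteq> x2" for x1 x2
    using dist that norm1 condY_eq[OF that(1), of N] condY_eq[OF that(2), of N]
    unfolding distinguishable_def k_def by auto
  have d1k: "d1 / k \<le> d1" using k1 d1 by (simp add: divide_le_eq mult_le_cancel_left1 order_trans [of _ 0])
  have small: "\<forall>x\<in>C. d * mY R < mY (condY N C x)" using dR d1k cbig by force
  have cinj: "inj_on (condY N C) C"
  proof (rule inj_onI, rule ccontr)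
    fix x1 x2 assume x: "x1 \<in> C" "x2 \<in> C" "condY N C x1 = condY N C x2" "x1 \<noteq> x2"
    have "mY (condY N C x1) \<le> d1 / k" using ov[OF x(1,2,4)] x(3) by simp
    then show False using cbig[OF x(1)] d1k by simp
  qed
  define F0 where "F0 = condY N C ` C"
  have adm0: "overlap_admissible mY R F0 d F0"
    unfolding overlap_admissible_def
  proof (intro conjI ballI)
    fix S assume "S \<in> F0" then show "S \<subseteq> R" unfolding F0_def using csub by auto
  next
    show "\<Union>F0 = R" unfolding F0_def R_def by (auto simp: condY_def rangeY_def)
  next
    fix S assume S: "S \<in> F0"
    show "delta_connected_set mY R F0 d S"
      unfolding delta_connected_set_def delta_connected_pts_def
    proof (intro ballI)
      fix u u' assume "u \<in> S" "u' \<in> S"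
      then show "\<exists>Ss. Ss \<noteq> [] \<and> set Ss \<subseteq> F0 \<and> u \<in> hd Ss \<and> u' \<in> last Ss \<and>
          (\<forall>i. 0 < i \<and> i < length Ss \<longrightarrow> d < mY (Ss ! i \<inter> Ss ! (i - 1)) / mY R)"
        using S by (intro exI[of _ "[S]"]) auto
    qed
    show "\<exists>A\<in>F0. A \<subseteq> S" using S by blast
  next
    fix S1 S2 assume S: "S1 \<in> F0" "S2 \<in> F0"
    show "S1 \<noteq> S2 \<longrightarrow> mY (S1 \<inter> S2) \<le> d * mY R"
      using S ov dR unfolding F0_def by auto
  next
    fix A assume "A \<in> F0" then show "\<exists>S\<in>F0. A \<subseteq> S" by blast
  qed
  have injD: "\<exists>g. inj_on g D' \<and> g ` D' \<subseteq> C" if "overlap_admissible mY R F0 d D'" for D'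
    using adm_inj[OF uncY1 C(1), of N d D'] that small unfolding R_def F0_def by blast
  have finD: "\<forall>D'. overlap_admissible mY R F0 d D' \<longrightarrow> finite D'"
    using injD C(2) inj_on_finite by blast
  have fam: "overlap_family mY R F0 d F0"
    unfolding overlap_family_def
  proof (intro conjI allI impI)
    show "overlap_admissible mY R F0 d F0" by (rule adm0)
  next
    fix D' assume "overlap_admissible mY R F0 d D'"
    then obtain g where g: "inj_on g D'" "g ` D' \<subseteq> C" using injD by blast
    have "inj_on (condY N C \<circ> g) D'"
      using g cinj by (simp add: comp_inj_on inj_on_subset)
    moreover have "(condY N C \<circ> g) ` D' \<subseteq> F0" using g unfolding F0_def by auto
    ultimately show "\<exists>f. inj_on f D' \<and> f ` D' \<subseteq> F0" by blast
  qed
  have "MI_YX mY N d C = log 2 (real (card F0))"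
    unfolding MI_YX_def R_def[symmetric] F0_def[symmetric]
    using MI_card[OF fam _ finD] C(2) unfolding F0_def by blast
  also have "card F0 = card C" unfolding F0_def using cinj by (simp add: card_image)
  finally show "MI_YX mY N (d1 / mY (rangeY N C) / real (card C)) C = log 2 (real (card C))"
    unfolding d_def k_def R_def .
  show "C \<in> F_class mX mY Xset N (d1 / mY (rangeY N C)) 1"
    unfolding F_class_def
  proof (intro CollectI conjI disjI2)
    show "C \<subseteq> Xn Xset 1" "finite C" "C \<noteq> {}" using C by auto
    have mXC: "0 < mX C" using unc_pos[OF uncX1 C(1) C(3)] .
    show "set_preceq (assocXY mX N C) 1"
      unfolding set_preceq_def
    proof (intro ballI)
      fix a assume "a \<in> assocXY mX N C"
      then obtain y1 y2 where a: "a = mX (condX N C y1 \<inter> condX N C y2) / mX C"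
        unfolding assocXY_def by blast
      have "condX N C y1 \<inter> condX N C y2 \<subseteq> C" by (auto simp: condX_def)
      then have "mX (condX N C y1 \<inter> condX N C y2) \<le> mX C" using unc_mono[OF uncX1 _ C(1)] by blast
      then show "a \<le> 1" using mXC a by simp
    qed
    show "set_preceq (assocYX mY N C) (d1 / mY (rangeY N C) / real (card C))"
      unfolding set_preceq_def
    proof (intro ballI)
      fix a assume "a \<in> assocYX mY N C"
      then obtain x1 x2 where a: "a = mY (condY N C x1 \<inter> condY N C x2) / mY (rangeY N C)"
         and x: "x1 \<in> C" "x2 \<in> C" "x1 \<noteq> x2"
        unfolding assocYX_def by blast
      have "mY (condY N C x1 \<inter> condY N C x2) / mY R \<le> (d1 / k) / mY R"
        by (rule divide_right_mono[OF ov[OF x] less_imp_le[OF mR]])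
      then show "a \<le> d1 / mY (rangeY N C) / real (card C)"
        unfolding R_def k_def a by (simp add: mult.commute)
    qed
  qed
qed


lemma final_ineq:
  fixes dbar h mR c K dn :: real and n :: nat
  assumes "0 \<le> dbar" "0 \<le> h" "0 < mR" "mR \<le> 1" "1 \<le> K" "K \<le> c" "1 \<le> n"
    "n = 1 \<longrightarrow> dbar * mR \<le> dn" "n > 1 \<longrightarrow> dbar * (h * c) ^ (n - 1) \<le> dn"
  shows "(dbar / c * mR) * (h * mR) ^ (n - 1) \<le> dn / K ^ n"
proof (cases "n = 1")
  case True
  then have dn: "dbar * mR \<le> dn" using assms by simp
  have c0: "0 < c" using assms by simp
  have dn0: "0 \<le> dn" using dn mult_nonneg_nonneg[of dbar mR] assms(1,3) by linarith
  have "dbar / c * mR = (dbar * mR) / c" by simp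
  also have "\<dots> \<le> dn / c" using dn c0 by (simp add: divide_right_mono)
  also have "\<dots> \<le> dn / K" using assms dn0
    by (intro divide_left_mono) auto
  finally show ?thesis using True by simp
next
  case False
  then obtain m where n: "n = Suc m" "1 \<le> m" using assms(7) by (cases n) auto
  then have dn: "dbar * (h * c) ^ m \<le> dn" using assms by simp
  have c0: "0 < c" "0 < K" using assms by auto
  have key: "(mR * K) ^ Suc m \<le> c ^ Suc m"
    using assms by (intro power_mono) (auto intro: order_trans[of _ K] simp: mult_le_cancel_right1)
  have A: "0 \<le> dbar * h ^ m" using assms by simp
  have "(dbar / c * mR) * (h * mR) ^ m = (dbar * h ^ m) * (mR ^ Suc m / c)"
    by (simp add: power_mult_distrib field_simps)
  also have "\<dots> \<le> (dbar * h ^ m) * (c ^ m / K ^ Suc m)"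
  proof (rule mult_left_mono[OF _ A])
    have "mR ^ Suc m * K ^ Suc m \<le> c ^ Suc m" using key by (simp only: power_mult_distrib)
    then have "mR ^ Suc m \<le> c ^ Suc m / K ^ Suc m" using c0 by (simp add: pos_le_divide_eq)
    then have "mR ^ Suc m / c \<le> c ^ Suc m / K ^ Suc m / c" by (rule divide_right_mono) (use c0 in simp)
    also have "\<dots> = c ^ m / K ^ Suc m" using c0 by (simp add: field_simps)
    finally show "mR ^ Suc m / c \<le> c ^ m / K ^ Suc m" .
  qed
  also have "\<dots> = dbar * (h * c) ^ m / K ^ Suc m" by (simp add: power_mult_distrib field_simps)
  also have "\<dots> \<le> dn / K ^ Suc m" using dn c0 by (simp add: divide_right_mono)
  finally show ?thesis using n by simp
qed

lemma lower_dist: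
  fixes mY :: "'y list set \<Rightarrow> real" and N :: "'x \<Rightarrow> 'y set"
  assumes normn: "mY (Yn n) = 1" and n1: "1 \<le> n"
    and prod: "\<forall>Ss. Ss \<noteq> [] \<longrightarrow> mY (listset Ss) = prod_list (map (mY1 mY) Ss)"
    and P: "finite P" "P \<subseteq> Xset" "P \<noteq> {}"
    and fac0: "\<forall>a\<in>P. \<forall>b\<in>P. 0 \<le> mY1 mY (N a \<inter> N b) \<and> mY1 mY (N a \<inter> N b) \<le> B"
    and fac1: "\<forall>a\<in>P. \<forall>b\<in>P. a \<noteq> b \<longrightarrow> mY1 mY (N a \<inter> N b) \<le> b0"
    and bound: "b0 * B ^ (n - 1) \<le> dn / real (card P) ^ n"
  shows "distinguishable mY Xset N n dn {xs. set xs \<subseteq> P \<and> length xs = n}"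
    "card {xs. set xs \<subseteq> P \<and> length xs = n} = card P ^ n"
proof -
  let ?C = "{xs. set xs \<subseteq> P \<and> length xs = n}"
  show cardC: "card ?C = card P ^ n" using P(1) by (rule card_lists_length_eq)
  show "distinguishable mY Xset N n dn ?C"
    unfolding distinguishable_def
  proof (intro conjI ballI impI)
    show "?C \<subseteq> Xn Xset n" using P(2) by (auto simp: Xn_def)
    show "finite ?C" using P(1) by (rule finite_lists_length_eq)
    obtain a where "a \<in> P" using P(3) by auto
    then have "replicate n a \<in> ?C" by auto
    then show "?C \<noteq> {}" by blast
  next
    fix xs ys assume xs: "xs \<in> ?C" and ys: "ys \<in> ?C" and ne: "xs \<noteq> ys"
    have len: "length xs = n" "length ys = n" using xs ys by auto
    define Ss where "Ss = map2 (\<lambda>a b. N a \<inter> N b) xs ys"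
    have lenS: "length Ss = n" using len unfolding Ss_def by simp
    have "SN N xs \<inter> SN N ys = listset Ss" unfolding Ss_def using len by (simp add: SN_inter)
    moreover have "Ss \<noteq> []" using lenS n1 by auto
    ultimately have eq: "mY (SN N xs \<inter> SN N ys) = prod_list (map (mY1 mY) Ss)" using prod by simp
    obtain i where i: "i < n" "xs ! i \<noteq> ys ! i"
      using ne len nth_equalityI[of xs ys] by auto
    have nth: "map (mY1 mY) Ss ! j = mY1 mY (N (xs ! j) \<inter> N (ys ! j))" if "j < n" for j
      using that len unfolding Ss_def by simp
    have inP: "xs ! j \<in> P" "ys ! j \<in> P" if "j < n" for j
      using that xs ys len by (auto simp: nth_mem subsetD)
    have "prod_list (map (mY1 mY) Ss) \<le> b0 * B ^ (length (map (mY1 mY) Ss) - 1)"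
    proof (rule prod_list_bound)
      show "\<forall>f\<in>set (map (mY1 mY) Ss). 0 \<le> f \<and> f \<le> B"
      proof
        fix f assume "f \<in> set (map (mY1 mY) Ss)"
        then obtain j where j: "j < n" "f = map (mY1 mY) Ss ! j" using lenS by (auto simp: in_set_conv_nth)
        then show "0 \<le> f \<and> f \<le> B" using nth[OF j(1)] inP[OF j(1)] fac0 by auto
      qed
      show "i < length (map (mY1 mY) Ss)" using i lenS by simp
      show "map (mY1 mY) Ss ! i \<le> b0" using nth[OF i(1)] inP[OF i(1)] fac1 i(2) by auto
    qed
    also have "\<dots> \<le> dn / real (card P) ^ n" using bound lenS by simp
    finally show "mY (SN N xs \<inter> SN N ys) / mY (Yn n) \<le> dn / real (card ?C)"
      using eq normn cardC by simp
  qed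
qed


theorem theorem13:
  fixes Xset :: "'x::real_normed_vector set"
    and N :: "'x \<Rightarrow> 'y set"
    and mX :: "'x list set \<Rightarrow> real"
    and mY :: "'y list set \<Rightarrow> real"
    and xstar :: 'x
    and \<delta> :: "nat \<Rightarrow> real"
    and Cbar :: "'x list set"
    and dbar :: real
    and D :: "'y list set set"
  assumes tb: "totally_bounded Xset"
    and uncX: "\<forall>n\<ge>1. uncertainty_fun (Xn Xset n) mX"
    and uncY: "\<forall>n\<ge>1. uncertainty_fun (Yn n) mY"
    and normY: "\<forall>n\<ge>1. mY (Yn n) = 1"
    and xstar: "xstar \<in> Xset" "\<forall>x\<in>Xset. mY1 mY (N xstar) \<le> mY1 mY (N x)"
    and d1: "0 \<le> \<delta> 1" "\<delta> 1 < mY1 mY (N xstar)"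
    and Cbar_F: "Cbar \<in> F_class mX mY Xset N dbar 1"
    and dbar: "0 \<le> dbar" "dbar \<le> \<delta> 1 / mY (rangeY N Cbar)"
    and opt: "ereal (MI_YX mY N (dbar / real (card Cbar)) Cbar) =
       (SUP p \<in> {(dt, C). 0 \<le> dt \<and> C \<in> F_class mX mY Xset N dt 1 \<and> dt \<le> \<delta> 1 / mY (rangeY N C)}.
          ereal (MI_YX mY N (fst p / real (card (snd p))) (snd p)))"
    and D: "overlap_family mY (rangeY N Cbar) (condY N Cbar ` Cbar) (dbar / real (card Cbar)) D"
    and dn: "\<forall>n>1. dbar * ((Max ((\<lambda>S. mY S / mY (rangeY N Cbar)) ` D)) * real (card Cbar)) ^ (n - 1) \<le> \<delta> n
                 \<and> \<delta> n < 1"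
    and prod: "\<forall>Ss. Ss \<noteq> [] \<longrightarrow> mY (listset Ss) = prod_list (map (mY1 mY) Ss)"
  shows "capacity_star mY Xset N \<delta> = ereal (MI_YX mY N (dbar / real (card Cbar)) Cbar)"
proof -
  have uncY1: "uncertainty_fun (Yn 1) mY" using uncY by simp
  have uncX1: "uncertainty_fun (Xn Xset 1) mX" using uncX by simp
  have norm1: "mY (Yn 1) = 1" using normY by simp
  have big: "\<forall>a\<in>Xset. \<delta> 1 < mY1 mY (N a)" using xstar(2) d1(2) by fastforce
  have Cb: "Cbar \<subseteq> Xn Xset 1" "finite Cbar" "Cbar \<noteq> {}" using Cbar_F unfolding F_class_def by auto
  define R where "R = rangeY N Cbar"
  define c where "c = real (card Cbar)"
  have c1: "1 \<le> c" using Cb unfolding c_def by (simp add: Suc_leI card_gt_0_iff)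
  have RY: "R \<subseteq> Yn 1" unfolding R_def using Cb(1) by (rule rangeY_sub)
  have cm: "mY (condY N Cbar x) = mY1 mY (N (hd x))" if "x \<in> Cbar" for x
  proof -
    have "x = [hd x]" using Xn1_elem[of x Xset] Cb(1) that by auto
    then show ?thesis using condY_eq[OF that, of N] SN_single[of N "hd x"] unfolding mY1_def by metis
  qed
  have cbig: "\<delta> 1 < mY (condY N Cbar x)" if "x \<in> Cbar" for x
    using cm[OF that] big Xn1_elem[of x Xset] Cb(1) that by auto
  have csub: "condY N Cbar x \<subseteq> R" for x unfolding R_def by (rule condY_sub)
  have Rne: "R \<noteq> {}"
  proof -
    obtain x where x: "x \<in> Cbar" using Cb by auto
    have "condY N Cbar x \<noteq> {}"
    proof
      assume "condY N Cbar x = {}"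
      then have "mY (condY N Cbar x) = 0" using uncY1 unfolding uncertainty_fun_def by simp
      then show False using cbig[OF x] d1 by simp
    qed
    then show "R \<noteq> {}" using csub[of x] by blast
  qed
  have mR: "0 < mY R" using unc_pos[OF uncY1 RY Rne] .
  have mR1: "mY R \<le> 1" using unc_mono[OF uncY1 RY order_refl] norm1 by simp
  have dR: "dbar * mY R \<le> \<delta> 1" using dbar(2) mR unfolding R_def by (simp add: pos_le_divide_eq)
  define dd where "dd = dbar / c"
  have ddR: "dd * mY R \<le> \<delta> 1"
  proof -
    have "dd * mY R = (dbar * mY R) / c" unfolding dd_def by simp
    also have "\<dots> \<le> dbar * mY R" using c1 mult_nonneg_nonneg[OF dbar(1) less_imp_le[OF mR]]
      by (simp add: divide_le_eq mult_le_cancel_left1)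
    finally show ?thesis using dR by simp
  qed
  have small: "\<forall>x\<in>Cbar. dd * mY (rangeY N Cbar) < mY (condY N Cbar x)"
    using ddR cbig unfolding R_def by force
  have admDD: "overlap_admissible mY R (condY N Cbar ` Cbar) dd D"
    using D unfolding overlap_family_def R_def dd_def c_def by simp
  obtain g where g: "inj_on g D" "g ` D \<subseteq> Cbar" "\<forall>S\<in>D. condY N Cbar (g S) \<subseteq> S"
    using adm_inj[OF uncY1 Cb(1) admDD[unfolded R_def] small] by blast
  have finD: "finite D" using inj_on_finite[OF g(1,2) Cb(2)] .
  have finAll: "\<forall>D'. overlap_admissible mY R (condY N Cbar ` Cbar) dd D' \<longrightarrow> finite D'"
  proof (intro allI impI)
    fix D' assume "overlap_admissible mY R (condY N Cbar ` Cbar) dd D'"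
    then obtain g' where "inj_on g' D'" "g' ` D' \<subseteq> Cbar"
      using adm_inj[OF uncY1 Cb(1), of N dd D'] small unfolding R_def by blast
    then show "finite D'" using inj_on_finite Cb(2) by blast
  qed
  have famD: "overlap_family mY R (condY N Cbar ` Cbar) dd D"
    using D unfolding R_def dd_def c_def by simp
  have MIeq: "MI_YX mY N (dbar / real (card Cbar)) Cbar = log 2 (real (card D))"
    using MI_card[OF famD finD finAll] unfolding MI_YX_def R_def dd_def c_def by simp
  define K where "K = real (card D)"
  have Kc: "K \<le> c" using card_inj_on_le[OF g(1,2) Cb(2)] unfolding K_def c_def by simp
  have Dne: "D \<noteq> {}" using admD(2)[OF admDD] Rne by auto
  have K1: "1 \<le> K" using Dne finD unfolding K_def by (simp add: Suc_leI card_gt_0_iff)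
  have rate1: "rate mY Xset N 1 (\<delta> 1) \<le> ereal (MI_YX mY N (dbar / real (card Cbar)) Cbar)"
    unfolding rate_def
  proof (rule SUP_least)
    fix C assume "C \<in> {C. distinguishable mY Xset N 1 (\<delta> 1) C}"
    then have dC: "distinguishable mY Xset N 1 (\<delta> 1) C" by simp
    note up = upper_part[OF uncX1 uncY1 norm1 dC d1(1) big]
    let ?p = "(\<delta> 1 / mY (rangeY N C), C)"
    have mem: "?p \<in> {(dt, C). 0 \<le> dt \<and> C \<in> F_class mX mY Xset N dt 1 \<and> dt \<le> \<delta> 1 / mY (rangeY N C)}"
      using up(1,2) d1(1) by simp
    have "ereal (log 2 (real (card C)) / real 1) = ereal (MI_YX mY N (fst ?p / real (card (snd ?p))) (snd ?p))"
      using up(3) by simp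
    also have "\<dots> \<le> (SUP p \<in> {(dt, C). 0 \<le> dt \<and> C \<in> F_class mX mY Xset N dt 1 \<and> dt \<le> \<delta> 1 / mY (rangeY N C)}.
          ereal (MI_YX mY N (fst p / real (card (snd p))) (snd p)))"
      by (rule SUP_upper[OF mem])
    also have "\<dots> = ereal (MI_YX mY N (dbar / real (card Cbar)) Cbar)" using opt by simp
    finally show "ereal (log 2 (real (card C)) / real 1) \<le> ereal (MI_YX mY N (dbar / real (card Cbar)) Cbar)" .
  qed
  have cap_le: "capacity_star mY Xset N \<delta> \<le> rate mY Xset N 1 (\<delta> 1)"
    unfolding capacity_star_def by (rule INF_lower) simp
  define P where "P = (\<lambda>S. hd (g S)) ` D"
  have gS: "g S = [hd (g S)] \<and> hd (g S) \<in> Xset" if "S \<in> D" for S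
    using Xn1_elem[of "g S" Xset] g(2) Cb(1) that by auto
  have injP: "inj_on (\<lambda>S. hd (g S)) D"
  proof (rule inj_onI)
    fix S1 S2 assume S: "S1 \<in> D" "S2 \<in> D" "hd (g S1) = hd (g S2)"
    then have "g S1 = g S2" using gS[OF S(1)] gS[OF S(2)] by metis
    then show "S1 = S2" using g(1) S(1,2) by (simp add: inj_on_eq_iff)
  qed
  have cardP: "real (card P) = K" unfolding P_def K_def using card_image[OF injP] by simp
  have finP: "finite P" unfolding P_def using finD by simp
  have PX: "P \<subseteq> Xset" unfolding P_def using gS by auto
  have Pne: "P \<noteq> {}" unfolding P_def using Dne by simp
  have condYa: "condY N Cbar (g S) = (\<lambda>y. [y]) ` N (hd (g S))" if "S \<in> D" for S
  proof -
    have "g S \<in> Cbar" using g(2) that by auto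
    then have "condY N Cbar (g S) = SN N (g S)" by (rule condY_eq)
    also have "\<dots> = SN N [hd (g S)]" using gS[OF that] by metis
    finally show ?thesis by (simp add: SN_single)
  qed
  have SR: "S \<subseteq> R" if "S \<in> D" for S using admD(1)[OF admDD that] .
  define h where "h = Max ((\<lambda>S. mY S / mY R) ` D)"
  have hS: "mY S \<le> h * mY R" if "S \<in> D" for S
  proof -
    have "mY S / mY R \<le> h" unfolding h_def using finD that by (intro Max_ge) auto
    then show ?thesis using mR by (simp add: pos_divide_le_eq)
  qed
  have h0: "0 \<le> h"
  proof -
    obtain S where S: "S \<in> D" using Dne by auto
    have "0 \<le> mY S" using unc_nonneg[OF uncY1] SR[OF S] RY by blast
    then have "0 \<le> mY S / mY R" using mR by simp
    also have "\<dots> \<le> h" unfolding h_def using finD S by (intro Max_ge) auto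
    finally show ?thesis .
  qed
  have Zsub: "(\<lambda>y. [y]) ` (N (hd (g S)) \<inter> N (hd (g S'))) \<subseteq> S \<inter> S'" if "S \<in> D" "S' \<in> D" for S S'
    using g(3) that condYa[OF that(1)] condYa[OF that(2)] by blast
  have fac0: "\<forall>a\<in>P. \<forall>b\<in>P. 0 \<le> mY1 mY (N a \<inter> N b) \<and> mY1 mY (N a \<inter> N b) \<le> h * mY R"
  proof (intro ballI)
    fix a b assume "a \<in> P" "b \<in> P"
    then obtain S S' where S: "S \<in> D" "S' \<in> D" "a = hd (g S)" "b = hd (g S')" unfolding P_def by auto
    let ?Z = "(\<lambda>y. [y]) ` (N a \<inter> N b)"
    have Z: "?Z \<subseteq> S" using Zsub[OF S(1,2)] S(3,4) by blast
    have SY: "S \<subseteq> Yn 1" using SR[OF S(1)] RY by blast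
    have "0 \<le> mY ?Z" using unc_nonneg[OF uncY1] Z SY by blast
    moreover have "mY ?Z \<le> mY S" using unc_mono[OF uncY1 Z SY] .
    ultimately show "0 \<le> mY1 mY (N a \<inter> N b) \<and> mY1 mY (N a \<inter> N b) \<le> h * mY R"
      using hS[OF S(1)] unfolding mY1_def by simp
  qed
  have fac1: "\<forall>a\<in>P. \<forall>b\<in>P. a \<noteq> b \<longrightarrow> mY1 mY (N a \<inter> N b) \<le> dbar / c * mY R"
  proof (intro ballI impI)
    fix a b assume "a \<in> P" "b \<in> P" "a \<noteq> b"
    then obtain S S' where S: "S \<in> D" "S' \<in> D" "a = hd (g S)" "b = hd (g S')" unfolding P_def by auto
    have ne: "S \<noteq> S'" using S \<open>a \<noteq> b\<close> by auto
    let ?Z = "(\<lambda>y. [y]) ` (N a \<inter> N b)"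
    have Z: "?Z \<subseteq> S \<inter> S'" using Zsub[OF S(1,2)] S(3,4) by blast
    have SY: "S \<inter> S' \<subseteq> Yn 1" using SR[OF S(1)] RY by blast
    have "mY ?Z \<le> mY (S \<inter> S')" using unc_mono[OF uncY1 Z SY] .
    also have "\<dots> \<le> dd * mY R" using admD(5)[OF admDD S(1,2) ne] .
    finally show "mY1 mY (N a \<inter> N b) \<le> dbar / c * mY R" unfolding mY1_def dd_def .
  qed
  have lower: "ereal (log 2 K) \<le> rate mY Xset N n (\<delta> n)" if n1: "1 \<le> n" for n
  proof -
    have normn: "mY (Yn n) = 1" using normY n1 by simp
    have dnn: "n > 1 \<longrightarrow> dbar * (h * c) ^ (n - 1) \<le> \<delta> n"
      using dn unfolding h_def c_def R_def by (simp add: mult.assoc)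
    have bound: "(dbar / c * mY R) * (h * mY R) ^ (n - 1) \<le> \<delta> n / real (card P) ^ n"
      unfolding cardP
      by (rule final_ineq[OF dbar(1) h0 mR mR1 K1 Kc n1]) (use dR dnn in auto)
    note ld = lower_dist[OF normn n1 prod finP PX Pne fac0 fac1 bound]
    let ?Cn = "{xs. set xs \<subseteq> P \<and> length xs = n}"
    have "ereal (log 2 (real (card ?Cn)) / real n) \<le> rate mY Xset N n (\<delta> n)"
      unfolding rate_def by (rule SUP_upper) (use ld(1) in simp)
    moreover have "log 2 (real (card ?Cn)) / real n = log 2 K"
    proof -
      have "real (card ?Cn) = K ^ n" using ld(2) cardP by simp
      then have "log 2 (real (card ?Cn)) = real n * log 2 K" using K1 by (simp add: log_nat_power)
      then show ?thesis using n1 by simp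
    qed
    ultimately show ?thesis by simp
  qed
  have cap_ge: "ereal (log 2 K) \<le> capacity_star mY Xset N \<delta>"
    unfolding capacity_star_def by (rule INF_greatest) (use lower in auto)
  show ?thesis
    using cap_le rate1 cap_ge MIeq unfolding K_def by (metis order_antisym order_trans)
qed

end
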